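(* Let $\mathcal{S}$ be a semi-primitive subspace of $\mathrm{Mat}_{m,n}(\mathbb{K})$ with $\#\mathbb{K}>\mathrm{urk}(\mathcal{S})$ and $n>0$. Then $\mathcal{S}$ has the column property.
   Context: $\mathrm{urk}$ is the maximal rank of a matrix in the space. Matrix spaces are equivalent ($\sim$) if $\mathcal{M}=P\mathcal{M}'Q$ with $P,Q$ invertible. A subspace is defective if none of its matrices has rank equal to its number of columns. $\mathcal{S}$ is $(r,s)$-decomposed ($0\le r\le m$, $1\le s\le n$) if every $M\in\mathcal{S}$ is of the form $\begin{bmatrix} ?_{r\times s}& C(M)\\ B(M)&0_{(m-r)\times(n-s)}\end{bmatrix}$, with lower space $B(\mathcal{S})$; $\mathcal{S}$ has the column property if for every such $(r,s)$ and every $(r,s)$-decomposed $\mathcal{S}'\sim\mathcal{S}$, the lower space of $\mathcal{S}'$ is defective. For an operator space $\mathcal{T}\subseteq\mathcal{L}(U,V)$: $\mathcal{T}$ is reduced if $\bigcap_{f}\ker f=\{0\}$ and $\sum_f\mathrm{im} f=V$; $c$-defective if $\dim\ker f\geq c$ for all $f\in\mathcal{T}$; its defectiveness index is the greatest such $c$; semi-primitive if reduced and there is no linear hyperplane $U'$ of $U$ with $\{f_{|U'}\mid f\in\mathcal{T}\}$ $c$-defective, $c$ being the defectiveness index. A matrix space is semi-primitive if the corresponding subspace of $\mathcal{L}(\mathbb{K}^n,\mathbb{K}^m)$ is. *)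

theory Defs
  imports "Jordan_Normal_Form.DL_Rank" "Jordan_Normal_Form.Matrix_Kernel"
begin

definition subdim :: "nat \<Rightarrow> 'a::field vec set \<Rightarrow> nat" where
  "subdim n W = vectorspace.dim class_ring ((module_vec TYPE('a) n)\<lparr>carrier := W\<rparr>)"

definition mrank :: "'a::field mat \<Rightarrow> nat" where
  "mrank A = vec_space.rank (dim_row A) A"

definition mat_subspace :: "nat \<Rightarrow> nat \<Rightarrow> 'a::field mat set \<Rightarrow> bool" where
  "mat_subspace m n S \<longleftrightarrow> S \<subseteq> carrier_mat m n \<and> 0\<^sub>m m n \<in> S
     \<and> (\<forall>A\<in>S. \<forall>B\<in>S. A + B \<in> S) \<and> (\<forall>c. \<forall>A\<in>S. c \<cdot>\<^sub>m A \<in> S)"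

definition urk :: "'a::field mat set \<Rightarrow> nat" where
  "urk S = Max (mrank ` S)"

definition mat_space_equiv :: "nat \<Rightarrow> nat \<Rightarrow> 'a::field mat set \<Rightarrow> 'a mat set \<Rightarrow> bool" where
  "mat_space_equiv m n S S' \<longleftrightarrow> (\<exists>P Q. P \<in> carrier_mat m m \<and> Q \<in> carrier_mat n n
      \<and> invertible_mat P \<and> invertible_mat Q \<and> S = (\<lambda>M. P * M * Q) ` S')"

definition defective :: "nat \<Rightarrow> 'a::field mat set \<Rightarrow> bool" where
  "defective s B \<longleftrightarrow> (\<forall>M\<in>B. mrank M \<noteq> s)"

definition rs_decomposed :: "nat \<Rightarrow> nat \<Rightarrow> nat \<Rightarrow> nat \<Rightarrow> 'a::field mat set \<Rightarrow> bool" where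
  "rs_decomposed m n r s S \<longleftrightarrow>
     (\<forall>M\<in>S. \<forall>i j. r \<le> i \<and> i < m \<and> s \<le> j \<and> j < n \<longrightarrow> M $$ (i, j) = 0)"

definition lower_space :: "nat \<Rightarrow> nat \<Rightarrow> nat \<Rightarrow> 'a::field mat set \<Rightarrow> 'a mat set" where
  "lower_space m r s S = (\<lambda>M. mat (m - r) s (\<lambda>(i, j). M $$ (i + r, j))) ` S"

definition column_property :: "nat \<Rightarrow> nat \<Rightarrow> 'a::field mat set \<Rightarrow> bool" where
  "column_property m n S \<longleftrightarrow>
     (\<forall>r s. r \<le> m \<and> 1 \<le> s \<and> s \<le> n \<longrightarrow>
        (\<forall>S'. mat_space_equiv m n S' S \<and> rs_decomposed m n r s S'
              \<longrightarrow> defective s (lower_space m r s S')))"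

definition mat_image :: "nat \<Rightarrow> 'a::field mat \<Rightarrow> 'a vec set" where
  "mat_image n M = {M *\<^sub>v x | x. x \<in> carrier_vec n}"

definition reduced_space :: "nat \<Rightarrow> nat \<Rightarrow> 'a::field mat set \<Rightarrow> bool" where
  "reduced_space m n S \<longleftrightarrow>
     (\<Inter>M\<in>S. mat_kernel M) = {0\<^sub>v n}
     \<and> LinearCombinations.module.span class_ring (module_vec TYPE('a) m) (\<Union>M\<in>S. mat_image n M) = carrier_vec m"

text \<open>c-defective: every operator has kernel of dimension at least c
  (kernels are computed inside a subspace U of K^n, giving the restrictions to U).\<close>
definition c_defective_on :: "nat \<Rightarrow> 'a::field vec set \<Rightarrow> nat \<Rightarrow> 'a mat set \<Rightarrow> bool" where
  "c_defective_on n U c S \<longleftrightarrow> (\<forall>M\<in>S. subdim n (mat_kernel M \<inter> U) \<ge> c)"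

definition defectiveness_index :: "nat \<Rightarrow> 'a::field mat set \<Rightarrow> nat" where
  "defectiveness_index n S = (GREATEST c. c_defective_on n (carrier_vec n) c S)"

definition lin_hyperplane :: "nat \<Rightarrow> 'a::field vec set \<Rightarrow> bool" where
  "lin_hyperplane n U \<longleftrightarrow> VectorSpace.subspace class_ring U (module_vec TYPE('a) n) \<and> subdim n U = n - 1"

definition semi_primitive :: "nat \<Rightarrow> nat \<Rightarrow> 'a::field mat set \<Rightarrow> bool" where
  "semi_primitive m n S \<longleftrightarrow> reduced_space m n S \<and>
     \<not> (\<exists>U. lin_hyperplane n U \<and> c_defective_on n U (defectiveness_index n S) S)"

end

theory Submission
  imports Defs
begin

definition minor :: "'b mat \<Rightarrow> nat \<Rightarrow> (nat \<Rightarrow> nat) \<Rightarrow> (nat \<Rightarrow> nat) \<Rightarrow> 'b mat" where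
  "minor A k f g = mat k k (\<lambda>(i,j). A $$ (f i, g j))"

lemma minor_carrier[simp]: "minor A k f g \<in> carrier_mat k k"
  unfolding minor_def by simp

lemma minor_index[simp]: "i < k \<Longrightarrow> j < k \<Longrightarrow> minor A k f g $$ (i,j) = A $$ (f i, g j)"
  unfolding minor_def by simp

lemma minor_dim[simp]: "dim_row (minor A k f g) = k" "dim_col (minor A k f g) = k"
  unfolding minor_def by simp_all

lemma poly_eval_hom: "comm_ring_hom (\<lambda>p::'b::comm_ring_1 poly. poly p a)"
  by unfold_locales simp_all

lemma det_poly_eval: "poly (det A) a = det (map_mat (\<lambda>p. poly p a) A)"
  using comm_ring_hom.hom_det[OF poly_eval_hom] by metis

lemma coeff_prod_lin:
  fixes a b :: "nat \<Rightarrow> 'b::comm_ring_1"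
  shows "coeff (\<Prod>i<k. [:a i, b i:]) k = (\<Prod>i<k. b i) \<and> degree (\<Prod>i<k. [:a i, b i:]) \<le> k"
proof (induction k)
  case 0
  then show ?case by simp
next
  case (Suc k)
  let ?P = "\<Prod>i<k. [:a i, b i:]"
  have d: "degree ?P \<le> k" using Suc by simp
  have eq: "?P * [:a k, b k:] = Polynomial.smult (a k) ?P + pCons 0 (Polynomial.smult (b k) ?P)"
    by (simp add: mult_pCons_right mult.commute)
  have "coeff (?P * [:a k, b k:]) (Suc k) = (\<Prod>i<k. b i) * b k"
    unfolding eq using Suc d by (simp add: coeff_eq_0 mult.commute)
  moreover have "degree (?P * [:a k, b k:]) \<le> Suc k"
    using degree_mult_le[of ?P "[:a k, b k:]"] d
    by (metis (no_types, lifting) add_le_mono degree_pCons_le le_trans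
        degree_pCons_eq_if le_SucI add_Suc_right add_0_right one_pCons degree_1 order.refl)
  ultimately show ?case by (simp add: prod.lessThan_Suc)
qed

lemma det_lin_top:
  fixes a b :: "nat \<Rightarrow> nat \<Rightarrow> 'b::comm_ring_1"
  shows "coeff (det (mat k k (\<lambda>(i,j). [:a i j, b i j:]))) k = det (mat k k (\<lambda>(i,j). b i j))"
proof -
  have c1: "mat k k (\<lambda>(i,j). [:a i j, b i j:]) \<in> carrier_mat k k" by simp
  have c2: "mat k k (\<lambda>(i,j). b i j) \<in> carrier_mat k k" by simp
  have *: "coeff (signof p * (\<Prod>i = 0..<k. mat k k (\<lambda>(i,j). [:a i j, b i j:]) $$ (i, p i))) k
      = signof p * (\<Prod>i = 0..<k. mat k k (\<lambda>(i,j). b i j) $$ (i, p i))" if p: "p permutes {0..<k}" for p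
  proof -
    have pi: "i < k \<Longrightarrow> p i < k" for i using p by (simp add: permutes_in_image)
    have e1: "(\<Prod>i = 0..<k. mat k k (\<lambda>(i,j). [:a i j, b i j:]) $$ (i, p i)) = (\<Prod>i<k. [:a i (p i), b i (p i):])"
      by (auto simp: pi atLeast0LessThan intro!: prod.cong)
    have e2: "(\<Prod>i = 0..<k. mat k k (\<lambda>(i,j). b i j) $$ (i, p i)) = (\<Prod>i<k. b i (p i))"
      by (auto simp: pi atLeast0LessThan intro!: prod.cong)
    show ?thesis unfolding e1 e2 using coeff_prod_lin[of "\<lambda>i. a i (p i)" "\<lambda>i. b i (p i)" k]
      by (auto simp: sign_def)
  qed
  show ?thesis unfolding det_def'[OF c1] det_def'[OF c2] coeff_sum
    by (rule sum.cong[OF refl], rule *, simp)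
qed

lemma det_lin_degree:
  fixes a b :: "nat \<Rightarrow> nat \<Rightarrow> 'b::comm_ring_1"
  shows "degree (det (mat k k (\<lambda>(i,j). [:a i j, b i j:]))) \<le> k"
  using degree_det_le[of k "mat k k (\<lambda>(i,j). [:a i j, b i j:])" 1] by simp

lemma bordered_det:
  fixes X :: "'b::idom mat"
  assumes X: "X \<in> carrier_mat (Suc k) (Suc k)"
    and nz: "det (mat k k (\<lambda>(i,j). X $$ (i,j))) \<noteq> 0"
  shows "det X = X $$ (k,k) * det (mat k k (\<lambda>(i,j). X $$ (i,j)))
     - vec k (\<lambda>j. X $$ (k,j)) \<bullet> (adj_mat (mat k k (\<lambda>(i,j). X $$ (i,j))) *\<^sub>v vec k (\<lambda>i. X $$ (i,k)))"
proof -
  define A0 where "A0 = mat k k (\<lambda>(i,j). X $$ (i,j))"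
  define a where "a = vec k (\<lambda>i. X $$ (i,k))"
  define \<beta> where "\<beta> = vec k (\<lambda>j. X $$ (k,j))"
  define d where "d = X $$ (k,k)"
  define \<delta> where "\<delta> = det A0"
  define w where "w = adj_mat A0 *\<^sub>v a"
  define e where "e = d * \<delta> - \<beta> \<bullet> w"
  have A0: "A0 \<in> carrier_mat k k" unfolding A0_def by simp
  have adj: "adj_mat A0 \<in> carrier_mat k k" using adj_mat[OF A0] by simp
  have a: "a \<in> carrier_vec k" unfolding a_def by simp
  have w: "w \<in> carrier_vec k" unfolding w_def using adj a by simp
  define Ca where "Ca = mat k 1 (\<lambda>(i,_). a $ i)"
  define Rb where "Rb = mat 1 k (\<lambda>(_,j). \<beta> $ j)"
  define Dd where "Dd = mat 1 1 (\<lambda>_. d)"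
  define Cw where "Cw = mat k 1 (\<lambda>(i,_). - w $ i)"
  define Dl where "Dl = mat 1 1 (\<lambda>_. \<delta>)"
  define De where "De = mat 1 1 (\<lambda>_. e)"
  have Xeq: "X = four_block_mat A0 Ca Rb Dd"
    by (rule eq_matI, insert X, auto simp: A0_def Ca_def Rb_def Dd_def a_def \<beta>_def d_def
        index_mat_four_block less_Suc_eq)
  define R where "R = four_block_mat (1\<^sub>m k) Cw (0\<^sub>m 1 k) Dl"
  have R: "R \<in> carrier_mat (k+1) (k+1)" unfolding R_def Cw_def Dl_def by auto
  have detR: "det R = \<delta>" unfolding R_def
    by (subst det_four_block_mat_lower_left_zero[of _ k _ 1], auto simp: Cw_def Dl_def det_single)
  have aw: "A0 *\<^sub>v w = \<delta> \<cdot>\<^sub>v a"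
  proof -
    have "A0 *\<^sub>v w = (A0 * adj_mat A0) *\<^sub>v a" unfolding w_def using A0 adj a
      by (simp add: assoc_mult_mat_vec)
    also have "\<dots> = (\<delta> \<cdot>\<^sub>m 1\<^sub>m k) *\<^sub>v a" using adj_mat(2)[OF A0] \<delta>_def by simp
    also have "\<dots> = \<delta> \<cdot>\<^sub>v a" using a by auto
    finally show ?thesis .
  qed
  have blk1: "A0 * Cw + Ca * Dl = 0\<^sub>m k 1"
  proof (rule eq_matI)
    fix i j assume ij: "i < dim_row (0\<^sub>m k 1 :: 'b mat)" "j < dim_col (0\<^sub>m k 1 :: 'b mat)"
    hence i: "i < k" and j: "j = 0" by auto
    have "(A0 * Cw) $$ (i,j) = row A0 i \<bullet> col Cw 0" using i j A0 unfolding Cw_def by simp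
    also have "col Cw 0 = - w" unfolding Cw_def using w by (auto simp: col_def)
    also have "row A0 i \<bullet> (- w) = - (row A0 i \<bullet> w)" using w A0 i by simp
    also have "row A0 i \<bullet> w = (A0 *\<^sub>v w) $ i" using A0 i by simp
    also have "\<dots> = \<delta> * a $ i" unfolding aw using a i by simp
    finally have 1: "(A0 * Cw) $$ (i,j) = - (\<delta> * a $ i)" .
    have 2: "(Ca * Dl) $$ (i,j) = a $ i * \<delta>" using i j unfolding Ca_def Dl_def
      by (simp add: scalar_prod_def row_def col_def)
    show "(A0 * Cw + Ca * Dl) $$ (i,j) = 0\<^sub>m k 1 $$ (i,j)"
      using 1 2 i j A0 unfolding Cw_def Ca_def Dl_def by (simp add: mult.commute)
  qed (auto simp: Cw_def Ca_def Dl_def)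
  have blk2: "Rb * Cw + Dd * Dl = De"
  proof (rule eq_matI)
    fix i j assume ij: "i < dim_row De" "j < dim_col De"
    hence i: "i = 0" and j: "j = 0" by (auto simp: De_def)
    have "(Rb * Cw) $$ (0,0) = \<beta> \<bullet> (- w)" unfolding Rb_def Cw_def
      using w by (auto simp: scalar_prod_def row_def col_def intro!: sum.cong)
    also have "\<dots> = - (\<beta> \<bullet> w)" using w by (simp add: \<beta>_def)
    finally show "(Rb * Cw + Dd * Dl) $$ (i,j) = De $$ (i,j)" using i j
      unfolding De_def Dd_def Dl_def Rb_def Cw_def e_def
      by (simp add: scalar_prod_def row_def col_def)
  qed (auto simp: De_def Rb_def Dd_def Cw_def Dl_def)
  have prod: "X * R = four_block_mat A0 (0\<^sub>m k 1) Rb De"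
    unfolding Xeq R_def
    apply (subst mult_four_block_mat[of _ k k _ 1 _ 1 _ _ k _ 1])
    using A0 blk1 blk2 by (auto simp: Ca_def Rb_def Dd_def Cw_def Dl_def)
  have "det (X * R) = \<delta> * e"
    unfolding prod
    by (subst det_four_block_mat_upper_right_zero[of _ k _ 1], insert A0,
        auto simp: Rb_def De_def det_single \<delta>_def)
  moreover have "det (X * R) = det X * \<delta>" using det_mult[OF X, of R] R detR by simp
  ultimately have "det X * \<delta> = e * \<delta>" by (simp add: mult.commute)
  hence "det X = e" using nz unfolding \<delta>_def A0_def by simp
  thus ?thesis unfolding e_def d_def \<delta>_def A0_def \<beta>_def w_def a_def by simp
qed

lemma mult_mat_vec_in_span:
  fixes A :: "'a::field mat"
  assumes A: "A \<in> carrier_mat m n" and v: "v \<in> carrier_vec n"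
  shows "A *\<^sub>v v \<in> LinearCombinations.module.span class_ring (module_vec TYPE('a) m) (set (cols A))"
proof -
  interpret W: vec_space "TYPE('a)" m .
  have cs: "set (cols A) \<subseteq> carrier_vec m" using A cols_dim by blast
  have "W.lincomb_list (\<lambda>i. v $ i) (cols A) = mat_of_cols m (cols A) *\<^sub>v vec (length (cols A)) (\<lambda>i. v $ i)"
    by (rule W.lincomb_list_as_mat_mult, insert cs, auto)
  also have "mat_of_cols m (cols A) = A" using A mat_of_cols_cols[of A] by simp
  also have "vec (length (cols A)) (\<lambda>i. v $ i) = v" using A v by auto
  finally have "A *\<^sub>v v = W.lincomb_list (\<lambda>i. v $ i) (cols A)" by simp
  hence "A *\<^sub>v v \<in> W.span_list (cols A)" unfolding W.span_list_def by auto
  thus ?thesis using W.span_list_as_span[OF cs] by simp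
qed

lemma linear_map_mat:
  fixes A :: "'a::field mat"
  assumes A: "A \<in> carrier_mat m n"
  shows "linear_map class_ring (module_vec TYPE('a) n) (module_vec TYPE('a) m) (\<lambda>v. A *\<^sub>v v)"
proof -
  have "(\<lambda>v. A *\<^sub>v v) \<in> LinearCombinations.module_hom class_ring (module_vec TYPE('a) n) (module_vec TYPE('a) m)"
    unfolding LinearCombinations.module_hom_def using A
    by (simp add: module_vec_simps class_ring_simps mult_add_distrib_mat_vec mult_mat_vec)
  thus ?thesis
    unfolding linear_map_def mod_hom_def mod_hom_axioms_def
    using vec_vs[of n, where 'a='a] vec_vs[of m, where 'a='a] by (simp add: vectorspace_def)
qed

lemma rank_nullity_mat:
  fixes A :: "'a::field mat"
  assumes A: "A \<in> carrier_mat m n"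
  shows "mrank A + subdim n (mat_kernel A) = n"
proof -
  interpret V: vec_space "TYPE('a)" n .
  interpret W: vec_space "TYPE('a)" m .
  interpret T: linear_map class_ring "module_vec TYPE('a) n" "module_vec TYPE('a) m" "\<lambda>v. A *\<^sub>v v"
    by (rule linear_map_mat[OF A])
  have im: "T.imT = W.span (set (cols A))"
  proof
    have imd: "T.imT = (\<lambda>v. A *\<^sub>v v) ` carrier_vec n"
      unfolding T.im_def by (simp add: module_vec_simps)
    show "T.imT \<subseteq> W.span (set (cols A))"
      unfolding imd using mult_mat_vec_in_span[OF A] by blast
    show "W.span (set (cols A)) \<subseteq> T.imT"
    proof (rule W.span_is_subset)
      show "set (cols A) \<subseteq> T.imT"
      proof
        fix c assume "c \<in> set (cols A)"
        then obtain j where j: "j < n" "c = col A j" using A by (auto simp: in_set_conv_nth)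
        have "A *\<^sub>v unit_vec n j = col A j" using A j by auto
        thus "c \<in> T.imT" unfolding imd using j unit_vec_carrier[of n j] by (metis image_eqI)
      qed
      show "submodule class_ring T.imT (module_vec TYPE('a) m)"
        using T.imT_is_subspace unfolding subspace_def by simp
    qed
  qed
  have ker: "T.kerT = mat_kernel A"
    unfolding T.ker_def mat_kernel[OF A] by (simp add: module_vec_simps)
  have rn: "vectorspace.dim class_ring (module_vec TYPE('a) m\<lparr>carrier := T.imT\<rparr>) +
        vectorspace.dim class_ring (module_vec TYPE('a) n\<lparr>carrier := T.kerT\<rparr>) = V.dim"
    by (rule T.rank_nullity, simp)
  have "mrank A = vectorspace.dim class_ring (module_vec TYPE('a) m\<lparr>carrier := T.imT\<rparr>)"
    unfolding mrank_def im using A by (simp add: W.rank_def)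
  moreover have "subdim n (mat_kernel A) = vectorspace.dim class_ring (module_vec TYPE('a) n\<lparr>carrier := T.kerT\<rparr>)"
    unfolding subdim_def ker ..
  ultimately show ?thesis using rn V.dim_is_n by simp
qed

lemma kernel_subspace:
  fixes A :: "'a::field mat"
  assumes A: "A \<in> carrier_mat m n"
  shows "subspace class_ring (mat_kernel A) (module_vec TYPE('a) n)"
proof -
  interpret T: linear_map class_ring "module_vec TYPE('a) n" "module_vec TYPE('a) m" "\<lambda>v. A *\<^sub>v v"
    by (rule linear_map_mat[OF A])
  have ker: "T.kerT = mat_kernel A"
    unfolding T.ker_def mat_kernel[OF A] by (simp add: module_vec_simps)
  show ?thesis using T.kerT_is_subspace unfolding ker .
qed

lemma minor_inj:
  fixes A :: "'a::field mat"
  assumes A: "A \<in> carrier_mat m n" and f: "\<forall>l<k. f l < m" and g: "\<forall>l<k. g l < n"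
    and d: "det (minor A k f g) \<noteq> 0"
    and v: "v \<in> carrier_vec k" and Cv: "mat m k (\<lambda>(i,l). A $$ (i, g l)) *\<^sub>v v = 0\<^sub>v m"
  shows "v = 0\<^sub>v k"
proof (rule ccontr)
  assume nz: "v \<noteq> 0\<^sub>v k"
  have "minor A k f g *\<^sub>v v = 0\<^sub>v k"
  proof (rule eq_vecI)
    fix l assume "l < dim_vec (0\<^sub>v k :: 'a vec)"
    hence l: "l < k" by simp
    have "(minor A k f g *\<^sub>v v) $ l = (mat m k (\<lambda>(i,l). A $$ (i, g l)) *\<^sub>v v) $ (f l)"
      using l f v by (simp add: scalar_prod_def row_def minor_def)
    also have "\<dots> = 0" using Cv f l by (metis index_zero_vec(1))
    finally show "(minor A k f g *\<^sub>v v) $ l = 0\<^sub>v k $ l" using l by simp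
  qed simp
  hence "det (minor A k f g) = 0"
    using det_0_iff_vec_prod_zero_field[OF minor_carrier[of A k f g]] v nz by blast
  thus False using d by simp
qed

lemma rank_ge_minor:
  fixes A :: "'a::field mat"
  assumes A: "A \<in> carrier_mat m n" and f: "\<forall>l<k. f l < m" and g: "\<forall>l<k. g l < n"
    and d: "det (minor A k f g) \<noteq> 0"
  shows "k \<le> mrank A"
proof -
  interpret W: vec_space "TYPE('a)" m .
  define C where "C = mat m k (\<lambda>(i,l). A $$ (i, g l))"
  have C: "C \<in> carrier_mat m k" unfolding C_def by simp
  have inj: "v \<in> carrier_vec k \<Longrightarrow> C *\<^sub>v v = 0\<^sub>v m \<Longrightarrow> v = 0\<^sub>v k" for v
    using minor_inj[OF A f g d] unfolding C_def by blast
  have colC: "l < k \<Longrightarrow> col C l = col A (g l)" for l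
    unfolding C_def using A g by (auto simp: col_def)
  have dist: "distinct (cols C)"
  proof (rule ccontr)
    assume "\<not> distinct (cols C)"
    then obtain a b where ab: "a < k" "b < k" "a \<noteq> b" "cols C ! a = cols C ! b"
      using C by (auto simp: distinct_conv_nth)
    hence eq: "col C a = col C b" using C by simp
    define v :: "'a vec" where "v = unit_vec k a - unit_vec k b"
    have v: "v \<in> carrier_vec k" unfolding v_def by simp
    have "v $ a = 1" unfolding v_def using ab by (simp add: unit_vec_def)
    hence "v \<noteq> 0\<^sub>v k" using ab by auto
    moreover have "C *\<^sub>v v = 0\<^sub>v m"
    proof -
      have "C *\<^sub>v v = C *\<^sub>v unit_vec k a - C *\<^sub>v unit_vec k b"
        unfolding v_def using C by (simp add: mult_minus_distrib_mat_vec)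
      also have "C *\<^sub>v unit_vec k a = col C a" using C ab(1) by auto
      also have "C *\<^sub>v unit_vec k b = col C b" using C ab(2) by auto
      finally show ?thesis using eq C ab by auto
    qed
    ultimately show False using inj v by blast
  qed
  have indpt: "W.lin_indpt (set (cols C))"
  proof
    assume "W.lin_dep (set (cols C))"
    then obtain v where "v \<in> carrier_vec k" "v \<noteq> 0\<^sub>v k" "C *\<^sub>v v = 0\<^sub>v m"
      using W.lin_depE[OF C _ dist] by blast
    thus False using inj by blast
  qed
  have sub: "set (cols C) \<subseteq> set (cols A)"
  proof
    fix c assume "c \<in> set (cols C)"
    then obtain l where l: "l < k" "c = col C l" using C by (auto simp: in_set_conv_nth)
    hence "c = col A (g l)" using colC by simp
    moreover have "g l < length (cols A)" using g l A by simp
    ultimately show "c \<in> set (cols A)" using A by (metis cols_length cols_nth nth_mem g l carrier_matD(2))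
  qed
  have "card (set (cols C)) = k" using distinct_card[OF dist] C by simp
  thus ?thesis using W.rank_ge_card_indpt[OF A sub indpt] unfolding mrank_def using A by simp
qed

lemma kernel_hyper_dim:
  fixes A :: "'a::field mat"
  assumes A: "A \<in> carrier_mat m n" and l: "ll \<in> carrier_vec n"
  shows "subdim n (mat_kernel A) \<le> subdim n (mat_kernel A \<inter> {x. ll \<bullet> x = 0}) + 1"
proof -
  interpret W: vec_space "TYPE('a)" "Suc m" .
  define St where "St = mat (Suc m) n (\<lambda>(i,j). if i < m then A $$ (i,j) else ll $ j)"
  define X1 where "X1 = mat (Suc m) n (\<lambda>(i,j). if i < m then A $$ (i,j) else 0)"
  define X2 where "X2 = mat (Suc m) n (\<lambda>(i,j). if i < m then 0 else ll $ j)"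
  have St: "St \<in> carrier_mat (Suc m) n" and X1: "X1 \<in> carrier_mat (Suc m) n"
    and X2: "X2 \<in> carrier_mat (Suc m) n" unfolding St_def X1_def X2_def by auto
  have sum: "St = X1 + X2" unfolding St_def X1_def X2_def by (rule eq_matI, auto)
  have rowSt: "i < m \<Longrightarrow> row St i = row A i" for i
    unfolding St_def using A by (auto intro!: eq_vecI)
  have rowSt': "row St m = ll" unfolding St_def using l by (auto intro!: eq_vecI)
  have rowX1: "i < m \<Longrightarrow> row X1 i = row A i" for i
    unfolding X1_def using A by (auto intro!: eq_vecI)
  have rowX1': "row X1 m = 0\<^sub>v n" unfolding X1_def by (auto intro!: eq_vecI)
  have kSt: "mat_kernel St = mat_kernel A \<inter> {x. ll \<bullet> x = 0}"
  proof -
    have "x \<in> carrier_vec n \<Longrightarrow> (St *\<^sub>v x = 0\<^sub>v (Suc m)) = (A *\<^sub>v x = 0\<^sub>v m \<and> ll \<bullet> x = 0)" for x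
    proof -
      assume x: "x \<in> carrier_vec n"
      have "(St *\<^sub>v x = 0\<^sub>v (Suc m)) = (\<forall>i<Suc m. row St i \<bullet> x = 0)"
        using St by (auto simp: vec_eq_iff)
      also have "\<dots> = ((\<forall>i<m. row A i \<bullet> x = 0) \<and> ll \<bullet> x = 0)"
        using rowSt rowSt' by (auto simp: less_Suc_eq)
      also have "(\<forall>i<m. row A i \<bullet> x = 0) = (A *\<^sub>v x = 0\<^sub>v m)"
        using A by (auto simp: vec_eq_iff)
      finally show ?thesis .
    qed
    thus ?thesis using mat_kernel[OF St] mat_kernel[OF A] by auto
  qed
  have kX1: "mat_kernel X1 = mat_kernel A"
  proof -
    have "x \<in> carrier_vec n \<Longrightarrow> (X1 *\<^sub>v x = 0\<^sub>v (Suc m)) = (A *\<^sub>v x = 0\<^sub>v m)" for x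
    proof -
      assume x: "x \<in> carrier_vec n"
      have "(X1 *\<^sub>v x = 0\<^sub>v (Suc m)) = (\<forall>i<Suc m. row X1 i \<bullet> x = 0)"
        using X1 by (auto simp: vec_eq_iff)
      also have "\<dots> = (\<forall>i<m. row A i \<bullet> x = 0)"
        using rowX1 rowX1' x by (auto simp: less_Suc_eq)
      also have "\<dots> = (A *\<^sub>v x = 0\<^sub>v m)"
        using A by (auto simp: vec_eq_iff)
      finally show ?thesis .
    qed
    thus ?thesis using mat_kernel[OF X1] mat_kernel[OF A] by auto
  qed
  have r2: "W.rank X2 \<le> 1"
    by (rule W.rank_le_1_product_entries[OF X2, of "\<lambda>r. if r < m then 0 else 1" "\<lambda>c. ll $ c"],
        auto simp: X2_def)
  have r12: "W.rank St \<le> W.rank X1 + W.rank X2" unfolding sum by (rule W.rank_subadditive[OF X1 X2])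
  have e1: "mrank St + subdim n (mat_kernel St) = n" by (rule rank_nullity_mat[OF St])
  have e2: "mrank X1 + subdim n (mat_kernel X1) = n" by (rule rank_nullity_mat[OF X1])
  have e3: "mrank A + subdim n (mat_kernel A) = n" by (rule rank_nullity_mat[OF A])
  have "mrank St \<le> mrank X1 + 1" using r12 r2 St X1 unfolding mrank_def by simp
  moreover have "subdim n (mat_kernel St) = subdim n (mat_kernel A \<inter> {x. ll \<bullet> x = 0})" using kSt by simp
  moreover have "subdim n (mat_kernel X1) = subdim n (mat_kernel A)" using kX1 by simp
  ultimately show ?thesis using e1 e2 e3 by linarith
qed

lemma hyperplane_kernel:
  fixes ll :: "'a::field vec"
  assumes l: "ll \<in> carrier_vec n" and j0: "j0 < n" "ll $ j0 \<noteq> 0"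
  shows "lin_hyperplane n {x \<in> carrier_vec n. ll \<bullet> x = 0}"
proof -
  interpret W: vec_space "TYPE('a)" 1 .
  define L where "L = mat 1 n (\<lambda>(_,j). ll $ j)"
  have L: "L \<in> carrier_mat 1 n" unfolding L_def by simp
  have rowL: "row L 0 = ll" unfolding L_def using l by (auto intro!: eq_vecI)
  have kL: "mat_kernel L = {x \<in> carrier_vec n. ll \<bullet> x = 0}"
  proof -
    have "x \<in> carrier_vec n \<Longrightarrow> (L *\<^sub>v x = 0\<^sub>v 1) = (row L 0 \<bullet> x = 0)" for x
      using L by (auto simp: vec_eq_iff)
    hence "x \<in> carrier_vec n \<Longrightarrow> (L *\<^sub>v x = 0\<^sub>v 1) = (ll \<bullet> x = 0)" for x
      unfolding rowL by blast
    thus ?thesis using mat_kernel[OF L] by auto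
  qed
  have "W.rank L \<le> 1"
    by (rule W.rank_le_1_product_entries[OF L, of "\<lambda>r. 1" "\<lambda>c. ll $ c"], auto simp: L_def)
  hence r1: "mrank L \<le> 1" unfolding mrank_def using L by simp
  have "det (minor L 1 (\<lambda>_. 0) (\<lambda>_. j0)) = ll $ j0"
    by (subst det_single, auto simp: L_def j0)
  hence r2: "1 \<le> mrank L" using rank_ge_minor[OF L, of 1 "\<lambda>_. 0" "\<lambda>_. j0"] j0 by auto
  have e: "mrank L + subdim n (mat_kernel L) = n" by (rule rank_nullity_mat[OF L])
  show ?thesis unfolding lin_hyperplane_def using kernel_subspace[OF L] e r1 r2 kL by auto
qed

lemma bordered_minor:
  fixes Y :: "'b::idom mat"
  assumes nz: "det (minor Y k f g) \<noteq> 0"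
  shows "det (minor Y (Suc k) (f(k:=i)) (g(k:=j))) = Y $$ (i,j) * det (minor Y k f g)
     - vec k (\<lambda>l. Y $$ (i, g l)) \<bullet> (adj_mat (minor Y k f g) *\<^sub>v vec k (\<lambda>l. Y $$ (f l, j)))"
proof -
  define X where "X = minor Y (Suc k) (f(k:=i)) (g(k:=j))"
  have X: "X \<in> carrier_mat (Suc k) (Suc k)" unfolding X_def by simp
  have sub: "mat k k (\<lambda>(a,b). X $$ (a,b)) = minor Y k f g"
  proof (rule eq_matI)
    fix a b assume "a < dim_row (minor Y k f g)" "b < dim_col (minor Y k f g)"
    hence ab: "a < k" "b < k" by auto
    thus "mat k k (\<lambda>(a,b). X $$ (a,b)) $$ (a,b) = minor Y k f g $$ (a,b)"
      unfolding X_def by simp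
  qed auto
  have v1: "vec k (\<lambda>b. X $$ (k,b)) = vec k (\<lambda>l. Y $$ (i, g l))"
    unfolding X_def by (intro eq_vecI) auto
  have v2: "vec k (\<lambda>a. X $$ (a,k)) = vec k (\<lambda>l. Y $$ (f l, j))"
    unfolding X_def by (intro eq_vecI) auto
  have xk: "X $$ (k,k) = Y $$ (i,j)" unfolding X_def by simp
  have "det X = X $$ (k,k) * det (mat k k (\<lambda>(i,j). X $$ (i,j)))
     - vec k (\<lambda>j. X $$ (k,j)) \<bullet> (adj_mat (mat k k (\<lambda>(i,j). X $$ (i,j))) *\<^sub>v vec k (\<lambda>i. X $$ (i,k)))"
    by (rule bordered_det[OF X], unfold sub, rule nz)
  also have "\<dots> = Y $$ (i,j) * det (minor Y k f g)
     - vec k (\<lambda>l. Y $$ (i, g l)) \<bullet> (adj_mat (minor Y k f g) *\<^sub>v vec k (\<lambda>l. Y $$ (f l, j)))"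
    unfolding sub v1 v2 xk ..
  finally show ?thesis unfolding X_def .
qed

lemma rows_exist:
  fixes C :: "'a::field mat"
  assumes "C \<in> carrier_mat m k" "\<forall>v \<in> carrier_vec k. C *\<^sub>v v = 0\<^sub>v m \<longrightarrow> v = 0\<^sub>v k"
  shows "\<exists>f. (\<forall>l<k. f l < m) \<and> det (minor C k f id) \<noteq> 0"
  using assms
proof (induction k arbitrary: C)
  case 0
  have "det (minor C 0 id id) = 1" by (rule det_dim_zero, simp)
  thus ?case by auto
next
  case (Suc k)
  note C = Suc.prems(1) and inj = Suc.prems(2)
  define C' where "C' = mat m k (\<lambda>(i,j). C $$ (i,j))"
  have C': "C' \<in> carrier_mat m k" unfolding C'_def by simp
  have ext: "C *\<^sub>v vec (Suc k) (\<lambda>j. if j < k then v $ j else c) = C' *\<^sub>v v + c \<cdot>\<^sub>v col C k"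
    if v: "v \<in> carrier_vec k" for v c
  proof (rule eq_vecI)
    fix i assume "i < dim_vec (C' *\<^sub>v v + c \<cdot>\<^sub>v col C k)"
    hence i: "i < m" using C by simp
    have "(C *\<^sub>v vec (Suc k) (\<lambda>j. if j < k then v $ j else c)) $ i
        = (\<Sum>j<Suc k. C $$ (i,j) * (if j < k then v $ j else c))"
      using C i by (simp add: scalar_prod_def row_def atLeast0LessThan)
    also have "\<dots> = (\<Sum>j<k. C $$ (i,j) * v $ j) + C $$ (i,k) * c"
      unfolding sum.lessThan_Suc by simp
    also have "\<dots> = (C' *\<^sub>v v + c \<cdot>\<^sub>v col C k) $ i"
      using C C' i v by (simp add: scalar_prod_def atLeast0LessThan C'_def col_def)
    finally show "(C *\<^sub>v vec (Suc k) (\<lambda>j. if j < k then v $ j else c)) $ i = (C' *\<^sub>v v + c \<cdot>\<^sub>v col C k) $ i" .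
  qed (use C in simp)
  have injC': "\<forall>v \<in> carrier_vec k. C' *\<^sub>v v = 0\<^sub>v m \<longrightarrow> v = 0\<^sub>v k"
  proof (intro ballI impI)
    fix v :: "'a vec" assume v: "v \<in> carrier_vec k" and Cv: "C' *\<^sub>v v = 0\<^sub>v m"
    define u where "u = vec (Suc k) (\<lambda>j. if j < k then v $ j else 0)"
    have u: "u \<in> carrier_vec (Suc k)" unfolding u_def by simp
    have colC: "col C k \<in> carrier_vec m" using C by (metis carrier_matD(1) col_dim)
    have z: "0 \<cdot>\<^sub>v col C k = 0\<^sub>v m" using colC C by (intro eq_vecI) auto
    have "C *\<^sub>v u = 0\<^sub>v m + 0 \<cdot>\<^sub>v col C k"
      unfolding u_def ext[OF v] Cv ..
    also have "\<dots> = 0\<^sub>v m" unfolding z by simp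
    finally have "u = 0\<^sub>v (Suc k)" using inj u by simp
    hence eq: "j < Suc k \<Longrightarrow> u $ j = 0" for j by simp
    show "v = 0\<^sub>v k"
    proof (rule eq_vecI)
      fix j assume "j < dim_vec (0\<^sub>v k :: 'a vec)"
      hence j: "j < k" by simp
      show "v $ j = 0\<^sub>v k $ j" using eq[of j] j unfolding u_def by simp
    qed (insert v, simp)
  qed
  from Suc.IH[OF C' injC'] obtain f where f: "\<forall>l<k. f l < m" and d: "det (minor C' k f id) \<noteq> 0" by blast
  have mC: "minor C' k f id = minor C k f id" unfolding C'_def using f by (auto intro!: eq_matI)
  define A0 where "A0 = minor C k f id"
  define \<delta> where "\<delta> = det A0"
  have dA: "\<delta> \<noteq> 0" using d mC unfolding \<delta>_def A0_def by simp
  show ?case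
  proof (rule ccontr)
    assume "\<not> ?case"
    hence all0: "\<forall>i<m. det (minor C (Suc k) (f(k:=i)) id) = 0"
      using f by (metis fun_upd_apply less_SucE)
    define w where "w = adj_mat A0 *\<^sub>v vec k (\<lambda>l. C $$ (f l, k))"
    have w: "w \<in> carrier_vec k" unfolding w_def A0_def using adj_mat(1)[of "minor C k f id" k] by simp
    have idk: "(id(k:=k)) = (id :: nat \<Rightarrow> nat)" by auto
    have eqs: "C $$ (i,k) * \<delta> = vec k (\<lambda>l. C $$ (i, l)) \<bullet> w" if i: "i < m" for i
    proof -
      have "det (minor C (Suc k) (f(k:=i)) (id(k:=k))) = C $$ (i,k) * \<delta> - vec k (\<lambda>l. C $$ (i, id l)) \<bullet> w"
        using bordered_minor[of C k f id i k] dA unfolding \<delta>_def A0_def w_def by simp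
      thus ?thesis using all0 i unfolding idk by simp
    qed
    define v where "v = vec (Suc k) (\<lambda>j. if j < k then w $ j else - \<delta>)"
    have "C *\<^sub>v v = C' *\<^sub>v w + (- \<delta>) \<cdot>\<^sub>v col C k" unfolding v_def by (rule ext[OF w])
    also have "\<dots> = 0\<^sub>v m"
    proof (rule eq_vecI)
      fix i assume "i < dim_vec (0\<^sub>v m :: 'a vec)"
      hence i: "i < m" by simp
      have "(C' *\<^sub>v w) $ i = vec k (\<lambda>l. C $$ (i, l)) \<bullet> w"
        using C' w i by (simp add: C'_def scalar_prod_def row_def)
      thus "(C' *\<^sub>v w + (- \<delta>) \<cdot>\<^sub>v col C k) $ i = 0\<^sub>v m $ i"
        using eqs[OF i] i C C' w by (simp add: col_def mult.commute)
    qed (insert C C' w, auto)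
    finally have "v = 0\<^sub>v (Suc k)" using inj unfolding v_def by auto
    hence "v $ k = 0" by simp
    thus False using dA unfolding v_def by simp
  qed
qed

lemma maximal_indpt_exists:
  fixes A :: "'a::field mat"
  shows "\<exists>S. maximal S (\<lambda>T. T \<subseteq> set (cols A) \<and> \<not> module.lin_dep class_ring (module_vec TYPE('a) m) T)"
proof -
  interpret W: vec_space "TYPE('a)" m .
  show ?thesis
    using maximal_exists[of "(\<lambda>T. T \<subseteq> set (cols A) \<and> W.lin_indpt T)" "card (set (cols A))" "{}"]
    by (meson List.finite_set card_mono empty_iff empty_subsetI W.finite_lin_indpt2 rev_finite_subset)
qed

lemma full_rank_inj:
  fixes A :: "'a::field mat"
  assumes A: "A \<in> carrier_mat m k" and r: "mrank A = k"
  shows "\<forall>v \<in> carrier_vec k. A *\<^sub>v v = 0\<^sub>v m \<longrightarrow> v = 0\<^sub>v k"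
proof -
  interpret W: vec_space "TYPE('a)" m .
  have rk: "W.rank A = k" using r A unfolding mrank_def by simp
  have dist: "distinct (cols A)"
  proof (rule ccontr)
    assume nd: "\<not> distinct (cols A)"
    obtain S where S: "maximal S (\<lambda>T. T \<subseteq> set (cols A) \<and> W.lin_indpt T)"
      using maximal_indpt_exists[of A m] by blast
    then have "card S \<le> card (set (cols A))" by (simp add: card_mono maximal_def)
    also have "card (set (cols A)) < length (cols A)"
      using nd card_length[of "cols A"] distinct_card[of "cols A"] by (metis card_distinct le_neq_implies_less)
    also have "length (cols A) = k" using A by simp
    finally have "card S < k" .
    thus False using W.rank_card_indpt[OF A S] rk by simp
  qed
  have indpt: "W.lin_indpt (set (cols A))" by (rule W.full_rank_lin_indpt[OF A rk dist])
  show ?thesis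
  proof (intro ballI impI)
    fix v :: "'a vec" assume v: "v \<in> carrier_vec k" and Av: "A *\<^sub>v v = 0\<^sub>v m"
    show "v = 0\<^sub>v k"
    proof (rule ccontr)
      assume "v \<noteq> 0\<^sub>v k"
      from W.lin_depI[OF A v this Av dist] indpt show False by simp
    qed
  qed
qed

lemma minor_exists:
  fixes A :: "'a::field mat"
  assumes A: "A \<in> carrier_mat m n"
  shows "\<exists>f g. (\<forall>l<mrank A. f l < m) \<and> (\<forall>l<mrank A. g l < n) \<and> det (minor A (mrank A) f g) \<noteq> 0"
proof -
  interpret W: vec_space "TYPE('a)" m .
  obtain S where S: "maximal S (\<lambda>T. T \<subseteq> set (cols A) \<and> W.lin_indpt T)"
    using maximal_indpt_exists[of A m] by blast
  have SA: "S \<subseteq> set (cols A)" and Si: "W.lin_indpt S" using S unfolding maximal_def by auto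
  have fS: "finite S" using SA finite_subset by blast
  define r where "r = mrank A"
  have rS: "r = card S" unfolding r_def mrank_def using W.rank_card_indpt[OF A S] A by simp
  obtain h where h: "bij_betw h {0..<card S} S" using ex_bij_betw_nat_finite[OF fS] by blast
  have hS: "l < r \<Longrightarrow> h l \<in> S" for l using h rS unfolding bij_betw_def by auto
  define g where "g l = (SOME j. j < n \<and> col A j = h l)" for l
  have g: "l < r \<Longrightarrow> g l < n \<and> col A (g l) = h l" for l
  proof -
    assume l: "l < r"
    have "h l \<in> set (cols A)" using hS[OF l] SA by auto
    then obtain j where "j < n" "col A j = h l" using A by (auto simp: in_set_conv_nth)
    hence "\<exists>j. j < n \<and> col A j = h l" by blast
    thus ?thesis unfolding g_def by (rule someI_ex)
  qed
  define C where "C = mat m r (\<lambda>(i,l). A $$ (i, g l))"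
  have C: "C \<in> carrier_mat m r" unfolding C_def by simp
  have colC: "l < r \<Longrightarrow> col C l = h l" for l
  proof -
    assume l: "l < r"
    have "col C l = col A (g l)" unfolding C_def using A l conjunct1[OF g[OF l]] by (intro eq_vecI) auto
    thus ?thesis using g[OF l] by simp
  qed
  have colsC: "cols C = map h [0..<r]"
    by (rule nth_equalityI, insert C colC, auto)
  have dist: "distinct (cols C)" unfolding colsC distinct_map
    using h rS unfolding bij_betw_def by auto
  have setC: "set (cols C) = S" unfolding colsC using h rS unfolding bij_betw_def by auto
  have inj: "\<forall>v \<in> carrier_vec r. C *\<^sub>v v = 0\<^sub>v m \<longrightarrow> v = 0\<^sub>v r"
  proof (intro ballI impI)
    fix v :: "'a vec" assume v: "v \<in> carrier_vec r" and Cv: "C *\<^sub>v v = 0\<^sub>v m"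
    show "v = 0\<^sub>v r"
    proof (rule ccontr)
      assume "v \<noteq> 0\<^sub>v r"
      from W.lin_depI[OF C v this Cv dist] Si setC show False by simp
    qed
  qed
  obtain f where f: "\<forall>l<r. f l < m" and d: "det (minor C r f id) \<noteq> 0"
    using rows_exist[OF C inj] by blast
  have "minor C r f id = minor A r f g" unfolding C_def using f
    by (intro eq_matI) auto
  thus ?thesis using f d g unfolding r_def[symmetric] by metis
qed

lemma rank_mult_left_inv:
  fixes A :: "'a::field mat"
  assumes A: "A \<in> carrier_mat m n" and P: "P \<in> carrier_mat m m" and iP: "invertible_mat P"
  shows "mrank (P * A) = mrank A"
proof -
  obtain B where B: "P * B = 1\<^sub>m m" "B * P = 1\<^sub>m (dim_row B)"
    using iP P unfolding invertible_mat_def inverts_mat_def by auto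
  have Bc: "B \<in> carrier_mat m m"
  proof -
    have "dim_col B = m" using arg_cong[OF B(1), of dim_col] by simp
    moreover have "dim_row B = m" using arg_cong[OF B(2), of dim_col] P by simp
    ultimately show ?thesis by auto
  qed
  have BP: "B * P = 1\<^sub>m m" using B(2) Bc by simp
  have "mat_kernel (P * A) = mat_kernel A"
  proof -
    have "x \<in> carrier_vec n \<Longrightarrow> (P * A *\<^sub>v x = 0\<^sub>v m) = (A *\<^sub>v x = 0\<^sub>v m)" for x
    proof
      assume x: "x \<in> carrier_vec n" and e: "P * A *\<^sub>v x = 0\<^sub>v m"
      have "A *\<^sub>v x = (B * P) *\<^sub>v (A *\<^sub>v x)" using BP A x by simp
      also have "\<dots> = B *\<^sub>v (P *\<^sub>v (A *\<^sub>v x))"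
        by (rule assoc_mult_mat_vec[OF Bc P], insert A x, simp)
      finally have 1: "A *\<^sub>v x = B *\<^sub>v (P *\<^sub>v (A *\<^sub>v x))" .
      have 2: "P *\<^sub>v (A *\<^sub>v x) = 0\<^sub>v m" using assoc_mult_mat_vec[OF P A x] e by simp
      have 3: "B *\<^sub>v 0\<^sub>v m = 0\<^sub>v m" using Bc by (intro eq_vecI) (auto simp: scalar_prod_def)
      show "A *\<^sub>v x = 0\<^sub>v m" using 1 2 3 by simp
    next
      assume x: "x \<in> carrier_vec n" and e: "A *\<^sub>v x = 0\<^sub>v m"
      have "P * A *\<^sub>v x = P *\<^sub>v (A *\<^sub>v x)" by (rule assoc_mult_mat_vec[OF P A x])
      thus "P * A *\<^sub>v x = 0\<^sub>v m" unfolding e using P by (auto intro!: eq_vecI simp: scalar_prod_def)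
    qed
    moreover have PA: "P * A \<in> carrier_mat m n" using P A by simp
    ultimately show ?thesis unfolding mat_kernel[OF A] mat_kernel[OF PA] by blast
  qed
  moreover have "mrank (P * A) + subdim n (mat_kernel (P * A)) = n"
    by (rule rank_nullity_mat, insert P A, auto)
  moreover have "mrank A + subdim n (mat_kernel A) = n" by (rule rank_nullity_mat[OF A])
  ultimately show ?thesis by simp
qed

lemma rank_mult_right_inv:
  fixes A :: "'a::field mat"
  assumes A: "A \<in> carrier_mat m n" and Q: "Q \<in> carrier_mat n n" and iQ: "invertible_mat Q"
  shows "mrank (A * Q) = mrank A"
proof -
  obtain B where B: "Q * B = 1\<^sub>m n" "B * Q = 1\<^sub>m (dim_row B)"
    using iQ Q unfolding invertible_mat_def inverts_mat_def by auto
  have Bc: "B \<in> carrier_mat n n"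
  proof -
    have "dim_col B = n" using arg_cong[OF B(1), of dim_col] by simp
    moreover have "dim_row B = n" using arg_cong[OF B(2), of dim_col] Q by simp
    ultimately show ?thesis by auto
  qed
  have "kernel.dim n (A * Q) = kernel.dim n A"
    by (rule mat_kernel_dim_mult_eq_right[OF A Q Bc B(1)])
  hence "subdim n (mat_kernel (A * Q)) = subdim n (mat_kernel A)"
    unfolding subdim_def using A Q by (simp add: kernel.intro)
  moreover have "mrank (A * Q) + subdim n (mat_kernel (A * Q)) = n"
    by (rule rank_nullity_mat, insert Q A, auto)
  moreover have "mrank A + subdim n (mat_kernel A) = n" by (rule rank_nullity_mat[OF A])
  ultimately show ?thesis by simp
qed

definition pen :: "nat \<Rightarrow> nat \<Rightarrow> 'a::comm_ring_1 mat \<Rightarrow> 'a mat \<Rightarrow> 'a poly mat" where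
  "pen m n M N = mat m n (\<lambda>(i,j). [:M $$ (i,j), N $$ (i,j):])"

lemma pen_carrier[simp]: "pen m n M N \<in> carrier_mat m n" unfolding pen_def by simp

lemma pen_index[simp]: "i < m \<Longrightarrow> j < n \<Longrightarrow> pen m n M N $$ (i,j) = [:M $$ (i,j), N $$ (i,j):]"
  unfolding pen_def by simp

lemma pen_dim[simp]: "dim_row (pen m n M N) = m" "dim_col (pen m n M N) = n"
  unfolding pen_def by simp_all

lemma pencil_minor_zero:
  fixes M N :: "'a::field mat"
  assumes M: "M \<in> carrier_mat m n" and N: "N \<in> carrier_mat m n"
    and bound: "\<forall>a. mrank (M + a \<cdot>\<^sub>m N) \<le> r" and rN: "mrank N \<le> r"
    and fld: "infinite (UNIV :: 'a set) \<or> r < card (UNIV :: 'a set)"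
    and F: "\<forall>l<Suc r. F l < m" and G: "\<forall>l<Suc r. G l < n"
  shows "det (minor (pen m n M N) (Suc r) F G) = 0"
proof (rule ccontr)
  define k where "k = Suc r"
  define p where "p = det (minor (pen m n M N) k F G)"
  assume "det (minor (pen m n M N) (Suc r) F G) \<noteq> 0"
  hence pnz: "p \<noteq> 0" unfolding p_def k_def .
  have mform: "minor (pen m n M N) k F G = mat k k (\<lambda>(i,j). [:M $$ (F i, G j), N $$ (F i, G j):])"
    using F G unfolding k_def by (intro eq_matI) auto
  have deg: "degree p \<le> k" unfolding p_def mform by (rule det_lin_degree)
  have "coeff p k = det (mat k k (\<lambda>(i,j). N $$ (F i, G j)))" unfolding p_def mform by (rule det_lin_top)
  also have "\<dots> = det (minor N k F G)" unfolding minor_def ..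
  also have "\<dots> = 0"
  proof (rule ccontr)
    assume "det (minor N k F G) \<noteq> 0"
    from rank_ge_minor[OF N _ _ this] F G rN show False unfolding k_def by fastforce
  qed
  finally have ck: "coeff p k = 0" .
  have degr: "degree p \<le> r"
  proof (rule ccontr)
    assume "\<not> degree p \<le> r"
    hence "degree p = k" using deg unfolding k_def by simp
    hence "lead_coeff p = 0" using ck by simp
    thus False using pnz by simp
  qed
  have roots: "poly p a = 0" for a
  proof -
    have "map_mat (\<lambda>q. poly q a) (minor (pen m n M N) k F G) = minor (M + a \<cdot>\<^sub>m N) k F G"
      using F G M N unfolding k_def by (intro eq_matI) auto
    hence "poly p a = det (minor (M + a \<cdot>\<^sub>m N) k F G)" unfolding p_def det_poly_eval by simp
    also have "\<dots> = 0"
    proof (rule ccontr)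
      assume "det (minor (M + a \<cdot>\<^sub>m N) k F G) \<noteq> 0"
      moreover have "M + a \<cdot>\<^sub>m N \<in> carrier_mat m n" using M N by simp
      ultimately have "k \<le> mrank (M + a \<cdot>\<^sub>m N)" using rank_ge_minor F G unfolding k_def by blast
      thus False using bound[rule_format, of a] unfolding k_def by simp
    qed
    finally show ?thesis .
  qed
  hence U: "{x. poly p x = 0} = UNIV" by auto
  from fld show False
  proof
    assume "infinite (UNIV :: 'a set)"
    thus False using poly_roots_finite[OF pnz] U by simp
  next
    assume "r < card (UNIV :: 'a set)"
    thus False using card_poly_roots_bound[OF pnz] U degr by simp
  qed
qed

lemma sum_delta_r: "a < (n::nat) \<Longrightarrow> (\<Sum>c = 0..<n. (X c::'b::comm_ring_1) * (if c = a then 1 else 0)) = X a"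
proof -
  assume a: "a < n"
  have "(\<Sum>c = 0..<n. X c * (if c = a then 1 else 0)) = (\<Sum>c = 0..<n. if c = a then X c else 0)"
    by (rule sum.cong, auto)
  also have "\<dots> = X a" using a by (subst sum.delta) auto
  finally show ?thesis .
qed

lemma sum_delta_l: "a < (n::nat) \<Longrightarrow> (\<Sum>c = 0..<n. (if c = a then 1 else 0) * (X c::'b::comm_ring_1)) = X a"
  using sum_delta_r[of a n X] by (simp add: mult.commute)

lemma eval0_mult_mat_vec:
  fixes X :: "'b::comm_ring_1 poly mat"
  assumes X: "X \<in> carrier_mat a b" and u: "u \<in> carrier_vec b"
    and u0: "\<forall>j<b. poly (u $ j) 0 = 0" and i: "i < a"
  shows "poly ((X *\<^sub>v u) $ i) 0 = 0"
proof -
  have "(X *\<^sub>v u) $ i = (\<Sum>j = 0..<b. X $$ (i,j) * u $ j)"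
    using X u i by (simp add: scalar_prod_def)
  hence "poly ((X *\<^sub>v u) $ i) 0 = (\<Sum>j = 0..<b. poly (X $$ (i,j)) 0 * poly (u $ j) 0)"
    by (simp add: poly_sum)
  also have "\<dots> = 0" using u0 by simp
  finally show ?thesis .
qed

lemma core_identity:
  fixes M N :: "'a::field mat"
  assumes M: "M \<in> carrier_mat m n" and N: "N \<in> carrier_mat m n"
    and bound: "\<forall>a. mrank (M + a \<cdot>\<^sub>m N) \<le> r" and rN: "mrank N \<le> r"
    and fld: "infinite (UNIV :: 'a set) \<or> r < card (UNIV :: 'a set)"
    and f: "\<forall>l<r. f l < m" and g: "\<forall>l<r. g l < n"
    and dnz: "det (minor (pen m n M N) r f g) \<noteq> 0"
    and i: "i < m" and j: "j < n"
  shows "det (minor (pen m n M N) r f g) * pen m n M N $$ (i,j)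
    = vec r (\<lambda>l. pen m n M N $$ (i, g l)) \<bullet> (adj_mat (minor (pen m n M N) r f g) *\<^sub>v vec r (\<lambda>l. pen m n M N $$ (f l, j)))"
proof -
  have F: "\<forall>l<Suc r. (f(r:=i)) l < m" using f i by (auto simp: less_Suc_eq)
  have G: "\<forall>l<Suc r. (g(r:=j)) l < n" using g j by (auto simp: less_Suc_eq)
  have "det (minor (pen m n M N) (Suc r) (f(r:=i)) (g(r:=j))) = 0"
    by (rule pencil_minor_zero[OF M N bound rN fld F G])
  thus ?thesis using bordered_minor[OF dnz, of i j] by (simp add: mult.commute)
qed

lemma core_annihilator:
  fixes M N :: "'a::field mat"
  assumes M: "M \<in> carrier_mat m n" and N: "N \<in> carrier_mat m n"
    and bound: "\<forall>a. mrank (M + a \<cdot>\<^sub>m N) \<le> r" and rN: "mrank N \<le> r"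
    and fld: "infinite (UNIV :: 'a set) \<or> r < card (UNIV :: 'a set)"
    and f: "\<forall>l<r. f l < m" and g: "\<forall>l<r. g l < n"
    and dnz: "det (minor (pen m n M N) r f g) \<noteq> 0"
  defines "Pm \<equiv> pen m n M N"
    and "A \<equiv> minor (pen m n M N) r f g"
    and "Gm \<equiv> mat n r (\<lambda>(c,l). if c = g l then 1 else 0) :: 'a poly mat"
    and "Fm \<equiv> mat r m (\<lambda>(l,i). if i = f l then 1 else 0) :: 'a poly mat"
  shows "Pm * (det A \<cdot>\<^sub>m 1\<^sub>m n - Gm * (adj_mat A * (Fm * Pm))) = 0\<^sub>m m n"
proof -
  define \<delta> where "\<delta> = det A"
  define K where "K = adj_mat A * (Fm * Pm)"
  have Pm: "Pm \<in> carrier_mat m n" unfolding Pm_def by simp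
  have Ac: "A \<in> carrier_mat r r" unfolding A_def by simp
  have adj: "adj_mat A \<in> carrier_mat r r" using adj_mat(1)[OF Ac] .
  have Gm: "Gm \<in> carrier_mat n r" unfolding Gm_def by simp
  have Fm: "Fm \<in> carrier_mat r m" unfolding Fm_def by simp
  have K: "K \<in> carrier_mat r n" unfolding K_def using adj Fm Pm by simp
  have rowPG: "row (Pm * Gm) i = vec r (\<lambda>l. Pm $$ (i, g l))" if i: "i < m" for i
  proof (rule eq_vecI)
    fix l assume "l < dim_vec (vec r (\<lambda>l. Pm $$ (i, g l)))"
    hence l: "l < r" by simp
    have "row (Pm * Gm) i $ l = (\<Sum>c = 0..<n. Pm $$ (i,c) * (if c = g l then 1 else 0))"
      using Pm Gm i l by (simp add: scalar_prod_def Gm_def)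
    also have "\<dots> = Pm $$ (i, g l)" using g l by (intro sum_delta_r) auto
    finally show "row (Pm * Gm) i $ l = vec r (\<lambda>l. Pm $$ (i, g l)) $ l" using l by simp
  qed (insert Pm Gm, simp)
  have colFP: "col (Fm * Pm) j = vec r (\<lambda>l. Pm $$ (f l, j))" if j: "j < n" for j
  proof (rule eq_vecI)
    fix l assume "l < dim_vec (vec r (\<lambda>l. Pm $$ (f l, j)))"
    hence l: "l < r" by simp
    have "col (Fm * Pm) j $ l = (\<Sum>i = 0..<m. (if i = f l then 1 else 0) * Pm $$ (i,j))"
      using Pm Fm j l by (simp add: scalar_prod_def Fm_def)
    also have "\<dots> = Pm $$ (f l, j)" using f l by (intro sum_delta_l) auto
    finally show "col (Fm * Pm) j $ l = vec r (\<lambda>l. Pm $$ (f l, j)) $ l" using l by simp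
  qed (insert Pm Fm, simp)
  have GK: "(Pm * Gm * K) $$ (i,j) = \<delta> * Pm $$ (i,j)" if i: "i < m" and j: "j < n" for i j
  proof -
    have "(Pm * Gm * K) $$ (i,j) = row (Pm * Gm) i \<bullet> col K j" by (rule index_mult_mat(1), insert Pm Gm K i j, auto)
    also have "col K j = adj_mat A *\<^sub>v col (Fm * Pm) j" unfolding K_def
      by (rule col_mult2[OF adj _ j], insert Fm Pm, simp)
    also have "row (Pm * Gm) i \<bullet> (adj_mat A *\<^sub>v col (Fm * Pm) j) = \<delta> * Pm $$ (i,j)"
      unfolding rowPG[OF i] colFP[OF j]
      using core_identity[OF M N bound rN fld f g dnz i j] unfolding \<delta>_def A_def Pm_def by simp
    finally show ?thesis .
  qed
  have "Pm * (\<delta> \<cdot>\<^sub>m 1\<^sub>m n - Gm * K) = Pm * (\<delta> \<cdot>\<^sub>m 1\<^sub>m n) - Pm * (Gm * K)"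
    by (rule mult_minus_distrib_mat[OF Pm], insert Gm K, auto)
  also have "Pm * (\<delta> \<cdot>\<^sub>m 1\<^sub>m n) = \<delta> \<cdot>\<^sub>m (Pm * 1\<^sub>m n)"
    using mult_smult_distrib[OF Pm, of "1\<^sub>m n" n \<delta>] by simp
  also have "Pm * 1\<^sub>m n = Pm" using Pm by simp
  also have "Pm * (Gm * K) = Pm * Gm * K" using Pm Gm K by simp
  also have "\<delta> \<cdot>\<^sub>m Pm - Pm * Gm * K = 0\<^sub>m m n"
    by (rule eq_matI, insert Pm Gm K GK, auto)
  finally show ?thesis unfolding \<delta>_def K_def .
qed

lemma core:
  fixes M N :: "'a::field mat"
  assumes M: "M \<in> carrier_mat m n" and N: "N \<in> carrier_mat m n"
    and bound: "\<forall>a. mrank (M + a \<cdot>\<^sub>m N) \<le> r" and rN: "mrank N \<le> r" and rM: "mrank M = r"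
    and fld: "infinite (UNIV :: 'a set) \<or> r < card (UNIV :: 'a set)"
    and decM: "\<forall>i j. rr \<le> i \<and> i < m \<and> s \<le> j \<and> j < n \<longrightarrow> M $$ (i,j) = 0"
    and decN: "\<forall>i j. rr \<le> i \<and> i < m \<and> s \<le> j \<and> j < n \<longrightarrow> N $$ (i,j) = 0"
    and lowN: "mrank (mat (m - rr) s (\<lambda>(i,j). N $$ (i + rr, j))) = s"
    and sn: "s \<le> n"
    and x: "x \<in> mat_kernel M" and c: "c < s"
  shows "x $ c = 0"
proof -
  obtain f g where f: "\<forall>l<r. f l < m" and g: "\<forall>l<r. g l < n" and dM: "det (minor M r f g) \<noteq> 0"
    using minor_exists[OF M] rM by blast
  define Pm where "Pm = pen m n M N"
  define A where "A = minor (pen m n M N) r f g"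
  define Gm where "Gm = (mat n r (\<lambda>(c,l). if c = g l then 1 else 0) :: 'a poly mat)"
  define Fm where "Fm = (mat r m (\<lambda>(l,i). if i = f l then 1 else 0) :: 'a poly mat)"
  have Pm: "Pm \<in> carrier_mat m n" unfolding Pm_def by simp
  have Ac: "A \<in> carrier_mat r r" unfolding A_def by simp
  have adj: "adj_mat A \<in> carrier_mat r r" using adj_mat(1)[OF Ac] .
  have Gm: "Gm \<in> carrier_mat n r" unfolding Gm_def by simp
  have Fm: "Fm \<in> carrier_mat r m" unfolding Fm_def by simp
  have "map_mat (\<lambda>q. poly q 0) A = minor M r f g"
    unfolding A_def using f g M N by (intro eq_matI) auto
  hence pA: "poly (det A) 0 = det (minor M r f g)" unfolding det_poly_eval by simp
  hence dnz: "det (minor (pen m n M N) r f g) \<noteq> 0" using dM unfolding A_def by auto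
  have ann: "Pm * (det A \<cdot>\<^sub>m 1\<^sub>m n - Gm * (adj_mat A * (Fm * Pm))) = 0\<^sub>m m n"
    using core_annihilator[OF M N bound rN fld f g dnz] unfolding Pm_def A_def Gm_def Fm_def .
  have xc: "x \<in> carrier_vec n" and Mx: "M *\<^sub>v x = 0\<^sub>v m" using mat_kernelD[OF M x] by auto
  define zx where "zx = vec n (\<lambda>j. [:x $ j:])"
  have zx: "zx \<in> carrier_vec n" unfolding zx_def by simp
  define Psi where "Psi = det A \<cdot>\<^sub>m 1\<^sub>m n - Gm * (adj_mat A * (Fm * Pm))"
  have GK: "Gm * (adj_mat A * (Fm * Pm)) \<in> carrier_mat n n" using Gm adj Fm Pm by simp
  have Psi: "Psi \<in> carrier_mat n n" unfolding Psi_def by (rule minus_carrier_mat[OF GK])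
  define Phi where "Phi = Psi *\<^sub>v zx"
  have Phi: "Phi \<in> carrier_vec n" unfolding Phi_def using Psi zx by simp
  have annv: "Pm *\<^sub>v Phi = 0\<^sub>v m"
  proof -
    have "Pm *\<^sub>v Phi = (Pm * Psi) *\<^sub>v zx" unfolding Phi_def
      by (rule assoc_mult_mat_vec[OF Pm Psi zx, symmetric])
    also have "Pm * Psi = 0\<^sub>m m n" unfolding Psi_def by (rule ann)
    finally show ?thesis using zx by (auto intro!: eq_vecI)
  qed
  define B where "B = mat (m - rr) s (\<lambda>(i,j). N $$ (i + rr, j))"
  have Bc: "B \<in> carrier_mat (m - rr) s" unfolding B_def by simp
  obtain hh where hh: "\<forall>l<s. hh l < m - rr" and dB: "det (minor B s hh id) \<noteq> 0"
    using rows_exist[OF Bc full_rank_inj[OF Bc lowN[folded B_def]]] by blast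
  define D where "D = minor Pm s (\<lambda>l. hh l + rr) id"
  have Dc: "D \<in> carrier_mat s s" unfolding D_def by simp
  have Dform: "D = mat s s (\<lambda>(i,j). [:M $$ (hh i + rr, j), N $$ (hh i + rr, j):])"
    unfolding D_def Pm_def using hh sn by (intro eq_matI) auto
  have "coeff (det D) s = det (mat s s (\<lambda>(i,j). N $$ (hh i + rr, j)))"
    unfolding Dform by (rule det_lin_top)
  also have "mat s s (\<lambda>(i,j). N $$ (hh i + rr, j)) = minor B s hh id"
    unfolding B_def using hh by (intro eq_matI) auto
  finally have "coeff (det D) s \<noteq> 0" using dB by simp
  hence dD: "det D \<noteq> 0" by auto
  define vv where "vv = vec s (\<lambda>c. Phi $ c)"
  have vv: "vv \<in> carrier_vec s" unfolding vv_def by simp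
  have Dv: "D *\<^sub>v vv = 0\<^sub>v s"
  proof (rule eq_vecI)
    fix l assume "l < dim_vec (0\<^sub>v s :: 'a poly vec)"
    hence l: "l < s" by simp
    define i where "i = hh l + rr"
    have i: "i < m" "rr \<le> i" unfolding i_def using hh l by auto
    have "(D *\<^sub>v vv) $ l = (\<Sum>c = 0..<s. Pm $$ (i, c) * Phi $ c)"
      using Dc vv l unfolding D_def vv_def i_def by (simp add: scalar_prod_def)
    also have "\<dots> = (\<Sum>c = 0..<s. Pm $$ (i, c) * Phi $ c) + (\<Sum>c = s..<n. Pm $$ (i, c) * Phi $ c)"
    proof -
      have "(\<Sum>c = s..<n. Pm $$ (i, c) * Phi $ c) = 0"
        using decM decN i unfolding Pm_def by (intro sum.neutral) auto
      thus ?thesis by simp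
    qed
    also have "\<dots> = (\<Sum>c = 0..<n. Pm $$ (i, c) * Phi $ c)"
      using sn by (intro sum.atLeastLessThan_concat) auto
    also have "\<dots> = (Pm *\<^sub>v Phi) $ i" using Pm Phi i by (simp add: scalar_prod_def)
    also have "\<dots> = 0" using annv i by simp
    finally show "(D *\<^sub>v vv) $ l = 0\<^sub>v s $ l" using l by simp
  qed (insert Dc, simp)
  have "det D \<cdot>\<^sub>v vv = 0\<^sub>v s"
  proof -
    have "det D \<cdot>\<^sub>v vv = (det D \<cdot>\<^sub>m 1\<^sub>m s) *\<^sub>v vv" using vv by auto
    also have "\<dots> = (adj_mat D * D) *\<^sub>v vv" using adj_mat(3)[OF Dc] by simp
    also have "\<dots> = adj_mat D *\<^sub>v (D *\<^sub>v vv)" by (rule assoc_mult_mat_vec[OF adj_mat(1)[OF Dc] Dc vv])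
    also have "\<dots> = 0\<^sub>v s" unfolding Dv using adj_mat(1)[OF Dc] by (auto intro!: eq_vecI simp: scalar_prod_def)
    finally show ?thesis .
  qed
  hence "(det D \<cdot>\<^sub>v vv) $ c = 0" using c by simp
  hence Phic: "Phi $ c = 0" using c dD unfolding vv_def by simp
  have PhiEq: "Phi = det A \<cdot>\<^sub>v zx - Gm *\<^sub>v (adj_mat A *\<^sub>v (Fm *\<^sub>v (Pm *\<^sub>v zx)))"
  proof -
    have "Phi = (det A \<cdot>\<^sub>m 1\<^sub>m n) *\<^sub>v zx - (Gm * (adj_mat A * (Fm * Pm))) *\<^sub>v zx"
      unfolding Phi_def Psi_def
      by (rule minus_mult_distrib_mat_vec[OF _ _ zx], insert Gm adj Fm Pm, auto)
    also have "(det A \<cdot>\<^sub>m 1\<^sub>m n) *\<^sub>v zx = det A \<cdot>\<^sub>v zx" using zx by auto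
    also have "(Gm * (adj_mat A * (Fm * Pm))) *\<^sub>v zx = Gm *\<^sub>v ((adj_mat A * (Fm * Pm)) *\<^sub>v zx)"
      by (rule assoc_mult_mat_vec[OF Gm _ zx], insert adj Fm Pm, simp)
    also have "(adj_mat A * (Fm * Pm)) *\<^sub>v zx = adj_mat A *\<^sub>v ((Fm * Pm) *\<^sub>v zx)"
      by (rule assoc_mult_mat_vec[OF adj _ zx], insert Fm Pm, simp)
    also have "(Fm * Pm) *\<^sub>v zx = Fm *\<^sub>v (Pm *\<^sub>v zx)"
      by (rule assoc_mult_mat_vec[OF Fm Pm zx])
    finally show ?thesis .
  qed
  have e1: "\<forall>i<m. poly ((Pm *\<^sub>v zx) $ i) 0 = 0"
  proof (intro allI impI)
    fix i assume i: "i < m"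
    have "(Pm *\<^sub>v zx) $ i = (\<Sum>j = 0..<n. [:M $$ (i,j), N $$ (i,j):] * [:x $ j:])"
      using Pm zx i unfolding Pm_def zx_def by (simp add: scalar_prod_def)
    hence "poly ((Pm *\<^sub>v zx) $ i) 0 = (\<Sum>j = 0..<n. M $$ (i,j) * x $ j)" by (simp add: poly_sum mult.commute)
    also have "\<dots> = (M *\<^sub>v x) $ i" using M xc i by (simp add: scalar_prod_def)
    also have "\<dots> = 0" using Mx i by simp
    finally show "poly ((Pm *\<^sub>v zx) $ i) 0 = 0" .
  qed
  have v1: "Pm *\<^sub>v zx \<in> carrier_vec m" using Pm zx by simp
  have e2: "\<forall>i<r. poly ((Fm *\<^sub>v (Pm *\<^sub>v zx)) $ i) 0 = 0"
    using eval0_mult_mat_vec[OF Fm v1 e1] by blast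
  have v2: "Fm *\<^sub>v (Pm *\<^sub>v zx) \<in> carrier_vec r" using Fm v1 by simp
  have e3: "\<forall>i<r. poly ((adj_mat A *\<^sub>v (Fm *\<^sub>v (Pm *\<^sub>v zx))) $ i) 0 = 0"
    using eval0_mult_mat_vec[OF adj v2 e2] by blast
  have v3: "adj_mat A *\<^sub>v (Fm *\<^sub>v (Pm *\<^sub>v zx)) \<in> carrier_vec r" using adj v2 by simp
  have cn: "c < n" using c sn by simp
  have e4: "poly ((Gm *\<^sub>v (adj_mat A *\<^sub>v (Fm *\<^sub>v (Pm *\<^sub>v zx)))) $ c) 0 = 0"
    using eval0_mult_mat_vec[OF Gm v3 e3 cn] .
  have "Phi $ c = det A * [:x $ c:] - (Gm *\<^sub>v (adj_mat A *\<^sub>v (Fm *\<^sub>v (Pm *\<^sub>v zx)))) $ c"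
    unfolding PhiEq using cn zx Gm v3 unfolding zx_def by simp
  hence "poly (Phi $ c) 0 = poly (det A) 0 * x $ c" using e4 by simp
  hence "det (minor M r f g) * x $ c = 0" using Phic pA by simp
  thus ?thesis using dM by simp
qed

lemma rank_le_n:
  fixes A :: "'a::field mat"
  assumes A: "A \<in> carrier_mat m n"
  shows "mrank A \<le> n"
  using rank_nullity_mat[OF A] by linarith

lemma inverse_ex:
  fixes Q :: "'a::field mat"
  assumes Q: "Q \<in> carrier_mat n n" and iQ: "invertible_mat Q"
  obtains B where "B \<in> carrier_mat n n" "Q * B = 1\<^sub>m n" "B * Q = 1\<^sub>m n"
proof -
  obtain B where B: "Q * B = 1\<^sub>m n" "B * Q = 1\<^sub>m (dim_row B)"
    using iQ Q unfolding invertible_mat_def inverts_mat_def by auto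
  have Bc: "B \<in> carrier_mat n n"
  proof -
    have "dim_col B = n" using arg_cong[OF B(1), of dim_col] by simp
    moreover have "dim_row B = n" using arg_cong[OF B(2), of dim_col] Q by simp
    ultimately show ?thesis by auto
  qed
  show ?thesis using that[OF Bc B(1)] B(2) Bc by simp
qed

lemma rank_PMQ:
  fixes A :: "'a::field mat"
  assumes A: "A \<in> carrier_mat m n" and P: "P \<in> carrier_mat m m" and iP: "invertible_mat P"
    and Q: "Q \<in> carrier_mat n n" and iQ: "invertible_mat Q"
  shows "mrank (P * A * Q) = mrank A"
proof -
  have PA: "P * A \<in> carrier_mat m n" using P A by simp
  have "mrank (P * A * Q) = mrank (P * A)" by (rule rank_mult_right_inv[OF PA Q iQ])
  also have "\<dots> = mrank A" by (rule rank_mult_left_inv[OF A P iP])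
  finally show ?thesis .
qed

lemma PMQ_lin:
  fixes M N :: "'a::field mat"
  assumes M: "M \<in> carrier_mat m n" and N: "N \<in> carrier_mat m n"
    and P: "P \<in> carrier_mat m m" and Q: "Q \<in> carrier_mat n n"
  shows "P * M * Q + a \<cdot>\<^sub>m (P * N * Q) = P * (M + a \<cdot>\<^sub>m N) * Q"
proof -
  have "P * (M + a \<cdot>\<^sub>m N) = P * M + P * (a \<cdot>\<^sub>m N)"
    by (rule mult_add_distrib_mat[OF P M], insert N, simp)
  also have "P * (a \<cdot>\<^sub>m N) = a \<cdot>\<^sub>m (P * N)" by (rule mult_smult_distrib[OF P N])
  finally have 1: "P * (M + a \<cdot>\<^sub>m N) = P * M + a \<cdot>\<^sub>m (P * N)" .
  have "(P * M + a \<cdot>\<^sub>m (P * N)) * Q = P * M * Q + (a \<cdot>\<^sub>m (P * N)) * Q"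
    by (rule add_mult_distrib_mat, insert P M N Q, auto)
  also have "(a \<cdot>\<^sub>m (P * N)) * Q = a \<cdot>\<^sub>m (P * N * Q)"
    by (rule mult_smult_assoc_mat, insert P N Q, auto)
  finally show ?thesis unfolding 1 by simp
qed

theorem mainTheorem12:
  fixes S :: "'a::field mat set" and m n :: nat
  assumes "mat_subspace m n S"
    and "semi_primitive m n S"
    and "infinite (UNIV :: 'a set) \<or> card (UNIV :: 'a set) > urk S"
    and "n > 0"
  shows "column_property m n S"
proof -
  note sub = assms(1)[unfolded mat_subspace_def]
  have Sc: "\<And>M. M \<in> S \<Longrightarrow> M \<in> carrier_mat m n" using sub by auto
  have S0: "0\<^sub>m m n \<in> S" using sub by auto
  have Sadd: "\<And>A B. A \<in> S \<Longrightarrow> B \<in> S \<Longrightarrow> A + B \<in> S" using sub by auto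
  have Ssm: "\<And>c A. A \<in> S \<Longrightarrow> c \<cdot>\<^sub>m A \<in> S" using sub by auto
  define ur where "ur = urk S"
  have fin: "finite (mrank ` S)"
    by (rule finite_subset[of _ "{..n}"], insert rank_le_n Sc, auto)
  have ne: "mrank ` S \<noteq> {}" using S0 by auto
  have urmax: "\<And>M. M \<in> S \<Longrightarrow> mrank M \<le> ur" unfolding ur_def urk_def using fin by simp
  obtain M0 where M0: "M0 \<in> S" "mrank M0 = ur"
    using Max_in[OF fin ne] unfolding ur_def urk_def by auto
  have fld: "infinite (UNIV :: 'a set) \<or> ur < card (UNIV :: 'a set)" using assms(3) unfolding ur_def by auto
  show ?thesis unfolding column_property_def
  proof (intro allI impI)
    fix rr s S'
    assume rs: "rr \<le> m \<and> 1 \<le> s \<and> s \<le> n"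
      and SS: "mat_space_equiv m n S' S \<and> rs_decomposed m n rr s S'"
    obtain P Q where P: "P \<in> carrier_mat m m" and Q: "Q \<in> carrier_mat n n"
      and iP: "invertible_mat P" and iQ: "invertible_mat Q" and S': "S' = (\<lambda>M. P * M * Q) ` S"
      using SS unfolding mat_space_equiv_def by blast
    have dec: "\<And>M i j. M \<in> S' \<Longrightarrow> rr \<le> i \<and> i < m \<and> s \<le> j \<and> j < n \<Longrightarrow> M $$ (i,j) = 0"
      using SS unfolding rs_decomposed_def by blast
    show "defective s (lower_space m rr s S')"
    proof (rule ccontr)
      assume "\<not> defective s (lower_space m rr s S')"
      then obtain N' where N'S: "N' \<in> S'" and lowN: "mrank (mat (m - rr) s (\<lambda>(i,j). N' $$ (i + rr, j))) = s"
        unfolding defective_def lower_space_def by auto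
      obtain N1 where N1: "N1 \<in> S" and N'eq: "N' = P * N1 * Q" using N'S S' by auto
      have N1c: "N1 \<in> carrier_mat m n" using Sc[OF N1] .
      have key: "\<forall>y \<in> mat_kernel (P * M * Q). y $ 0 = 0" if MS: "M \<in> S" and rM: "mrank M = ur" for M
      proof
        fix y assume y: "y \<in> mat_kernel (P * M * Q)"
        have Mc: "M \<in> carrier_mat m n" using Sc[OF MS] .
        have M'c: "P * M * Q \<in> carrier_mat m n" using P Mc Q by simp
        have N'c: "P * N1 * Q \<in> carrier_mat m n" using P N1c Q by simp
        have bound: "\<forall>a. mrank (P * M * Q + a \<cdot>\<^sub>m (P * N1 * Q)) \<le> ur"
        proof
          fix a
          have "M + a \<cdot>\<^sub>m N1 \<in> S" using Sadd[OF MS Ssm[OF N1]] .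
          moreover have "M + a \<cdot>\<^sub>m N1 \<in> carrier_mat m n" using Mc N1c by simp
          ultimately show "mrank (P * M * Q + a \<cdot>\<^sub>m (P * N1 * Q)) \<le> ur"
            unfolding PMQ_lin[OF Mc N1c P Q] using rank_PMQ[OF _ P iP Q iQ] urmax by metis
        qed
        have rN: "mrank (P * N1 * Q) \<le> ur" using rank_PMQ[OF N1c P iP Q iQ] urmax[OF N1] by simp
        have rM': "mrank (P * M * Q) = ur" using rank_PMQ[OF Mc P iP Q iQ] rM by simp
        have decM: "\<forall>i j. rr \<le> i \<and> i < m \<and> s \<le> j \<and> j < n \<longrightarrow> (P * M * Q) $$ (i,j) = 0"
          using dec[of "P * M * Q"] MS S' by blast
        have decN: "\<forall>i j. rr \<le> i \<and> i < m \<and> s \<le> j \<and> j < n \<longrightarrow> (P * N1 * Q) $$ (i,j) = 0"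
          using dec[of "P * N1 * Q"] N1 S' by blast
        show "y $ 0 = 0"
          by (rule core[OF M'c N'c bound rN rM' fld decM decN lowN[unfolded N'eq]], insert rs y, auto)
      qed
      obtain B where Bc: "B \<in> carrier_mat n n" and QB: "Q * B = 1\<^sub>m n" and BQ: "B * Q = 1\<^sub>m n"
        using inverse_ex[OF Q iQ] by blast
      define ll where "ll = row B 0"
      have ll: "ll \<in> carrier_vec n" unfolding ll_def using Bc by (metis carrier_matD(2) row_carrier)
      obtain j0 where j0: "j0 < n" "ll $ j0 \<noteq> 0"
      proof (rule ccontr)
        assume "\<not> thesis"
        hence z: "\<forall>j<n. ll $ j = 0" using that by blast
        have "(B * Q) $$ (0,0) = row B 0 \<bullet> col Q 0" using Bc Q assms(4) by simp
        also have "\<dots> = 0" using z Q Bc assms(4) unfolding ll_def by (simp add: scalar_prod_def)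
        finally show False using BQ assms(4) by simp
      qed
      define U where "U = {x \<in> carrier_vec n. ll \<bullet> x = 0}"
      have hyp: "lin_hyperplane n U" unfolding U_def by (rule hyperplane_kernel[OF ll j0])
      have kerU: "mat_kernel M \<subseteq> U" if MS: "M \<in> S" and rM: "mrank M = ur" for M
      proof
        fix x assume x: "x \<in> mat_kernel M"
        have Mc: "M \<in> carrier_mat m n" using Sc[OF MS] .
        have xc: "x \<in> carrier_vec n" and Mx: "M *\<^sub>v x = 0\<^sub>v m" using mat_kernelD[OF Mc x] by auto
        define y where "y = B *\<^sub>v x"
        have yc: "y \<in> carrier_vec n" unfolding y_def using Bc xc by simp
        have PM: "P * M \<in> carrier_mat m n" using P Mc by simp
        have Qy: "Q *\<^sub>v y \<in> carrier_vec n" using Q yc by simp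
        have "P * M * Q *\<^sub>v y = P *\<^sub>v (M *\<^sub>v (Q *\<^sub>v y))"
          unfolding assoc_mult_mat_vec[OF PM Q yc] assoc_mult_mat_vec[OF P Mc Qy] ..
        also have "Q *\<^sub>v y = x" unfolding y_def using assoc_mult_mat_vec[OF Q Bc xc] QB xc by simp
        also have "P *\<^sub>v (M *\<^sub>v x) = 0\<^sub>v m" unfolding Mx using P by (auto intro!: eq_vecI simp: scalar_prod_def)
        finally have "y \<in> mat_kernel (P * M * Q)" using yc P Mc Q by (intro mat_kernelI) auto
        hence "y $ 0 = 0" using key[OF MS rM] by blast
        moreover have "y $ 0 = ll \<bullet> x" unfolding y_def ll_def using Bc xc assms(4) by simp
        ultimately show "x \<in> U" unfolding U_def using xc by simp
      qed
      define c where "c = defectiveness_index n S"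
      define Pc where "Pc = (\<lambda>k. c_defective_on n (carrier_vec n) k S)"
      have kd: "subdim n (mat_kernel M \<inter> carrier_vec n) = subdim n (mat_kernel M)" if "M \<in> S" for M
      proof -
        have "mat_kernel M \<inter> carrier_vec n = mat_kernel M" using mat_kernel_carrier[OF Sc[OF that]] by blast
        thus ?thesis by simp
      qed
      have Pc0: "Pc 0" unfolding Pc_def c_defective_on_def by simp
      have Pcb: "\<And>k. Pc k \<Longrightarrow> k \<le> n"
      proof -
        fix k assume "Pc k"
        hence "k \<le> subdim n (mat_kernel (0\<^sub>m m n :: 'a mat) \<inter> carrier_vec n)" unfolding Pc_def c_defective_on_def using S0 by blast
        also have "\<dots> = subdim n (mat_kernel (0\<^sub>m m n :: 'a mat))" using kd[OF S0] .
        also have "\<dots> \<le> n" using rank_nullity_mat[of "0\<^sub>m m n :: 'a mat" m n] by simp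
        finally show "k \<le> n" .
      qed
      have "Pc c" unfolding c_def defectiveness_index_def Pc_def[symmetric]
        by (rule GreatestI_nat[of Pc 0 n, OF Pc0 Pcb])
      hence cle: "\<And>M. M \<in> S \<Longrightarrow> c \<le> subdim n (mat_kernel M)"
        unfolding Pc_def c_defective_on_def using kd by auto
      have "c_defective_on n U c S" unfolding c_defective_on_def
      proof
        fix M assume MS: "M \<in> S"
        have Mc: "M \<in> carrier_mat m n" using Sc[OF MS] .
        show "c \<le> subdim n (mat_kernel M \<inter> U)"
        proof (cases "mrank M = ur")
          case True
          hence "mat_kernel M \<inter> U = mat_kernel M" using kerU[OF MS] by blast
          thus ?thesis using cle[OF MS] by simp
        next
          case False
          hence lt: "mrank M < ur" using urmax[OF MS] by simp
          have e1: "mrank M + subdim n (mat_kernel M) = n" by (rule rank_nullity_mat[OF Mc])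
          have e0: "mrank M0 + subdim n (mat_kernel M0) = n" by (rule rank_nullity_mat[OF Sc[OF M0(1)]])
          have c0: "c \<le> subdim n (mat_kernel M0)" using cle[OF M0(1)] .
          have "mat_kernel M \<inter> {x. ll \<bullet> x = 0} = mat_kernel M \<inter> U"
            unfolding U_def using mat_kernel_carrier[OF Mc] by blast
          hence h: "subdim n (mat_kernel M) \<le> subdim n (mat_kernel M \<inter> U) + 1"
            using kernel_hyper_dim[OF Mc ll] by simp
          show ?thesis using e1 e0 c0 h lt M0(2) by linarith
        qed
      qed
      with hyp have "\<exists>U. lin_hyperplane n U \<and> c_defective_on n U (defectiveness_index n S) S"
        unfolding c_def by blast
      thus False using assms(2) unfolding semi_primitive_def by blast
    qed
  qed
qed

end
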